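(* Let $A,G\in\mathbb{R}^{d\times d}$ be symmetric positive definite, let $u\in\mathbb{R}^d\setminus\{0\}$, and let $G_+=\mathrm{BFGS}(A,G,u)$. Let $\xi\ge1$ be a constant such that $\frac1\xi A\preceq G$ and $\theta(A,G,u)\le\xi$. Then $$\sigma(A,G)-\sigma(A,G_+)\ge\frac{1}{4\xi^2}\theta^2(A,G,u)-\ln\xi.$$
   Context: $\mathrm{BFGS}(A,G,u):=G-\frac{Guu^\top G}{u^\top Gu}+\frac{Auu^\top A}{u^\top Au}$; $\sigma(A,G):=\mathrm{Tr}(A^{-1}G)-d$; $\theta(A,G,u):=\left(\frac{u^\top (G-A)A^{-1}(G-A)u}{u^\top GA^{-1}Gu}\right)^{1/2}$. *)

theory Defs
  imports "HOL-Analysis.Analysis"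
begin

definition sym_pos_def :: "real^'n^'n \<Rightarrow> bool" where
  "sym_pos_def A \<longleftrightarrow> transpose A = A \<and> (\<forall>x. x \<noteq> 0 \<longrightarrow> 0 < x \<bullet> (A *v x))"

definition loewner_le :: "real^'n^'n \<Rightarrow> real^'n^'n \<Rightarrow> bool" where
  "loewner_le A B \<longleftrightarrow> (\<forall>x. 0 \<le> x \<bullet> ((B - A) *v x))"

definition outer_prod :: "real^'n \<Rightarrow> real^'n \<Rightarrow> real^'n^'n" where
  "outer_prod x y = (\<chi> i j. x $ i * y $ j)"

definition BFGS :: "real^'n^'n \<Rightarrow> real^'n^'n \<Rightarrow> real^'n \<Rightarrow> real^'n^'n" where
  "BFGS A G u = G - (1 / (u \<bullet> (G *v u))) *\<^sub>R (G ** outer_prod u u ** G)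
                  + (1 / (u \<bullet> (A *v u))) *\<^sub>R (A ** outer_prod u u ** A)"

definition sigma :: "real^'n^'n \<Rightarrow> real^'n^'n \<Rightarrow> real" where
  "sigma A G = trace (matrix_inv A ** G) - real CARD('n)"

definition theta :: "real^'n^'n \<Rightarrow> real^'n^'n \<Rightarrow> real^'n \<Rightarrow> real" where
  "theta A G u = sqrt ((u \<bullet> (((G - A) ** matrix_inv A ** (G - A)) *v u))
                      / (u \<bullet> ((G ** matrix_inv A ** G) *v u)))"

end

theory Submission
  imports Defs
begin


lemma A: "(t::real) > 1 \<Longrightarrow> 4/(t+1)^2 \<le> 1/t"
proof -
  assume t: "t > 1"
  have 1: "4/(t+1)^2 = (4*t)/(t*(t+1)^2)" using t by simp
  have 2: "1/t = (t+1)^2/(t*(t+1)^2)" using t by simp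
  have "(t+1)^2 - 4*t = (t-1)^2" by algebra
  hence "4*t \<le> (t+1)^2" by (smt (verit) zero_le_power2)
  thus ?thesis unfolding 1 2 using t by (intro divide_right_mono) auto
qed
lemma B: "(x::real) \<ge> 1 \<Longrightarrow> 1/x - 1 + 2*(x-1)/(x+1) - (1 + (x-2)*x)/(4*x^2) \<ge> 0"
proof -
  assume x: "x \<ge> 1"
  define D where "D = 4*x^2*(x+1)"
  have D: "D > 0" using x by (simp add: D_def)
  have 1: "1/x = (4*x*(x+1))/D" using x by (simp add: D_def power2_eq_square)
  have 2: "1 = D/D" using D by simp
  have 3: "2*(x-1)/(x+1) = (8*x^2*(x-1))/D"
  proof -
    have e: "8*x^2*(x-1) = 4*x^2*(2*(x-1))" by simp
    have "(8*x^2*(x-1))/D = (4*x^2*(2*(x-1)))/(4*x^2*(x+1))" by (simp only: e D_def)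
    also have "\<dots> = 2*(x-1)/(x+1)" by (rule mult_divide_mult_cancel_left) (use x in simp)
    finally show ?thesis by simp
  qed
  have 4: "(1 + (x-2)*x)/(4*x^2) = ((1 + (x-2)*x)*(x+1))/D" using x by (simp add: D_def power2_eq_square)
  have "1/x - 1 + 2*(x-1)/(x+1) - (1 + (x-2)*x)/(4*x^2) = (4*x*(x+1) - D + 8*x^2*(x-1) - (1 + (x-2)*x)*(x+1))/D"
    unfolding 1 3 4 by (subst (2) 2) (simp add: diff_divide_distrib add_divide_distrib)
  also have "4*x*(x+1) - D + 8*x^2*(x-1) - (1 + (x-2)*x)*(x+1) = (x-1)^2*(3*x-1)"
    unfolding D_def by algebra
  finally show ?thesis using x D by simp
qed
lemma ln_lb: fixes x::real assumes "x \<ge> 1" shows "ln x \<ge> 2*(x-1)/(x+1)"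
proof -
  let ?f = "\<lambda>x::real. ln x - 2*(x-1)/(x+1)"
  have "?f 1 \<le> ?f x"
  proof (rule DERIV_nonneg_imp_increasing_open[OF assms])
    fix t :: real assume t: "1 < t" "t < x"
    have "DERIV ?f t :> (1/t - 4/(t+1)^2)"
    proof -
      have "DERIV ?f t :> (1/t - (2*(t+1) - 2*(t-1))/((t+1)*(t+1)))"
        using t by (auto intro!: derivative_eq_intros)
      moreover have "(2*(t+1) - 2*(t-1))/((t+1)*(t+1)) = 4/(t+1)^2" by (simp add: power2_eq_square)
      ultimately show ?thesis by simp
    qed
    moreover have "1/t - 4/(t+1)^2 \<ge> 0" using A[OF t(1)] by simp
    ultimately show "\<exists>y. DERIV ?f t :> y \<and> y \<ge> 0" by blast
  next
    show "continuous_on {1..x} ?f" by (intro continuous_intros) auto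
  qed
  thus ?thesis by simp
qed

lemma final_ineq: fixes a b c \<xi> :: real
  assumes a: "a > 0" and b: "b > 0" and c: "c > 0" and xi: "\<xi> \<ge> 1"
    and cs: "b^2 \<le> a*c" and cb: "c \<le> \<xi>*b"
  shows "a/b - 1 \<ge> (1/(4*\<xi>^2)) * ((a - 2*b + c)/a) - ln \<xi>"
proof -
  define t where "t = b/a"
  have t0: "t > 0" using a b by (simp add: t_def)
  have "b*b \<le> a*(\<xi>*b)" using cs cb a by (smt (verit) mult_left_mono power2_eq_square)
  hence "b \<le> a*\<xi>" using b by (simp add: mult.commute mult.left_commute)
  hence tx: "t \<le> \<xi>" using a by (simp add: t_def field_simps)
  have L: "ln \<xi> \<ge> 2*(\<xi>-1)/(\<xi>+1)" by (rule ln_lb[OF xi])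
  have rhs: "(a - 2*b + c)/a \<le> 1 + (\<xi>-2)*t"
    using cb a by (simp add: t_def field_simps)
  have g\<xi>: "1/\<xi> - 1 + 2*(\<xi>-1)/(\<xi>+1) - (1 + (\<xi>-2)*\<xi>)/(4*\<xi>^2) \<ge> 0" by (rule B[OF xi])
  have gt: "(1/t - 1/\<xi>) + ((\<xi>-2)*\<xi> - (\<xi>-2)*t)/(4*\<xi>^2) \<ge> 0"
  proof -
    have "1/t - 1/\<xi> = (\<xi>-t)/(t*\<xi>)" using t0 xi by (simp add: field_simps)
    also have "\<dots> \<ge> (\<xi>-t)/(\<xi>*\<xi>)" using tx t0 xi
      by (intro divide_left_mono mult_right_mono) auto
    finally have 1: "1/t - 1/\<xi> \<ge> (\<xi>-t)/(\<xi>*\<xi>)" .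
    have 2: "((\<xi>-2)*\<xi> - (\<xi>-2)*t)/(4*\<xi>^2) \<ge> -(\<xi>-t)/(4*\<xi>^2)"
    proof -
      have e: "(\<xi>-2)*\<xi> - (\<xi>-2)*t + (\<xi>-t) = (\<xi>-t)*(\<xi>-1)" by algebra
      have "(\<xi>-t)*(\<xi>-1) \<ge> 0" using tx xi by simp
      hence "(\<xi>-2)*\<xi> - (\<xi>-2)*t \<ge> -(\<xi>-t)" using e by linarith
      thus ?thesis by (intro divide_right_mono) auto
    qed
    have "(\<xi>-t)/(\<xi>*\<xi>) - (\<xi>-t)/(4*\<xi>^2) \<ge> 0" using tx xi by (simp add: field_simps power2_eq_square)
    thus ?thesis using 1 2 by linarith
  qed
  have "a/b = 1/t" by (simp add: t_def)
  have "(1/(4*\<xi>^2)) * ((a - 2*b + c)/a) \<le> (1 + (\<xi>-2)*t)/(4*\<xi>^2)"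
  proof -
    have "(1/(4*\<xi>^2)) * ((a - 2*b + c)/a) = ((a - 2*b + c)/a) / (4*\<xi>^2)" by simp
    also have "\<dots> \<le> (1 + (\<xi>-2)*t)/(4*\<xi>^2)" using rhs by (intro divide_right_mono) auto
    finally show ?thesis .
  qed
  moreover have "(1 + (\<xi>-2)*t)/(4*\<xi>^2) = (1 + (\<xi>-2)*\<xi>)/(4*\<xi>^2) - ((\<xi>-2)*\<xi> - (\<xi>-2)*t)/(4*\<xi>^2)"
    by (simp add: diff_divide_distrib add_divide_distrib)
  ultimately show ?thesis using g\<xi> gt L \<open>a/b = 1/t\<close> by linarith
qed


lemma sym_inner: fixes A :: "real^'n^'n" assumes "transpose A = A"
  shows "x \<bullet> (A *v y) = y \<bullet> (A *v x)"
proof -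
  have "x \<bullet> (A *v y) = (x v* A) \<bullet> y" by (simp add: dot_lmul_matrix)
  also have "x v* A = transpose A *v x" by simp
  finally show ?thesis using assms by (simp add: inner_commute)
qed

lemma pd_invertible: fixes A :: "real^'n^'n" assumes "sym_pos_def A" shows "invertible A"
proof -
  have "\<forall>x. A *v x = 0 \<longrightarrow> x = 0" using assms unfolding sym_pos_def_def by force
  thus ?thesis unfolding invertible_left_inverse matrix_left_invertible_ker .
qed

lemma inv_props: fixes A :: "real^'n^'n" assumes "invertible A"
  shows "A ** matrix_inv A = mat 1" "matrix_inv A ** A = mat 1"
proof -
  have "\<exists>A'. A ** A' = mat 1 \<and> A' ** A = mat 1" using assms unfolding invertible_def .
  hence "A ** matrix_inv A = mat 1 \<and> matrix_inv A ** A = mat 1"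
    unfolding matrix_inv_def by (rule someI_ex)
  thus "A ** matrix_inv A = mat 1" "matrix_inv A ** A = mat 1" by auto
qed

lemma trace_scaleR: "trace (k *\<^sub>R (M::real^'n^'n)) = k * trace M"
  by (simp add: trace_def sum_distrib_left)

lemma trace_outer: "trace ((M::real^'n^'n) ** outer_prod u u) = u \<bullet> (M *v u)"
  unfolding trace_def outer_prod_def matrix_matrix_mult_def matrix_vector_mult_def inner_vec_def
  by (simp add: sum_distrib_left mult_ac)

lemma trace_outer2: "trace ((X::real^'n^'n) ** (P ** outer_prod u u ** Q)) = u \<bullet> ((Q ** X ** P) *v u)"
proof -
  have "trace (X ** (P ** outer_prod u u ** Q)) = trace ((X ** P ** outer_prod u u) ** Q)"
    by (simp add: matrix_mul_assoc)
  also have "\<dots> = trace (Q ** (X ** P ** outer_prod u u))" by (rule trace_mul_sym)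
  also have "\<dots> = trace ((Q ** X ** P) ** outer_prod u u)" by (simp add: matrix_mul_assoc)
  finally show ?thesis by (simp add: trace_outer)
qed


lemma mat_sub_ldistrib: "(X::real^'n^'n) ** (Y - Z) = X ** Y - X ** Z"
  by (simp add: matrix_matrix_mult_def vec_eq_iff sum_subtractf right_diff_distrib)

lemma mat_scaleR_right: "(X::real^'n^'n) ** (k *\<^sub>R Y) = k *\<^sub>R (X ** Y)"
  by (simp add: matrix_matrix_mult_def vec_eq_iff sum_distrib_left mult_ac)

theorem lemma7:
  fixes A G :: "real^'n^'n" and u :: "real^'n" and \<xi> :: real
  assumes "sym_pos_def A" and "sym_pos_def G" and "u \<noteq> 0"
    and "\<xi> \<ge> 1"
    and "loewner_le ((1 / \<xi>) *\<^sub>R A) G"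
    and "theta A G u \<le> \<xi>"
  shows "sigma A G - sigma A (BFGS A G u) \<ge> (1 / (4 * \<xi>^2)) * (theta A G u)^2 - ln \<xi>"
proof -
  define Ai where "Ai = matrix_inv A"
  have invA: "A ** Ai = mat 1" "Ai ** A = mat 1"
    using inv_props[OF pd_invertible[OF assms(1)]] by (auto simp: Ai_def)
  have symA: "transpose A = A" and pdA: "\<And>x. x \<noteq> 0 \<Longrightarrow> 0 < x \<bullet> (A *v x)"
    using assms(1) unfolding sym_pos_def_def by auto
  have symG: "transpose G = G" and pdG: "\<And>x. x \<noteq> 0 \<Longrightarrow> 0 < x \<bullet> (G *v x)"
    using assms(2) unfolding sym_pos_def_def by auto
  define w where "w = Ai *v (G *v u)"
  have Aw: "A *v w = G *v u" unfolding w_def by (simp add: matrix_vector_mul_assoc matrix_mul_assoc invA)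
  define a where "a = w \<bullet> (A *v w)"
  define b where "b = u \<bullet> (G *v u)"
  define c where "c = u \<bullet> (A *v u)"
  have b0: "b > 0" using pdG assms(3) by (simp add: b_def)
  have c0: "c > 0" using pdA assms(3) by (simp add: c_def)
  have "G *v u \<noteq> 0" using b0 by (auto simp: b_def)
  hence "w \<noteq> 0" using Aw by auto
  hence a0: "a > 0" using pdA by (simp add: a_def)
  have b_alt: "b = u \<bullet> (A *v w)" by (simp add: b_def Aw)
  have a_alt: "u \<bullet> ((G ** Ai ** G) *v u) = a"
  proof -
    have "u \<bullet> ((G ** Ai ** G) *v u) = u \<bullet> (G *v w)"
      by (simp add: w_def matrix_vector_mul_assoc matrix_mul_assoc)
    also have "\<dots> = w \<bullet> (G *v u)" by (rule sym_inner[OF symG])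
    also have "\<dots> = a" by (simp add: a_def Aw)
    finally show ?thesis .
  qed
  have c_alt: "u \<bullet> ((A ** Ai ** A) *v u) = c"
    by (simp add: c_def invA matrix_mul_assoc)
  have sig: "sigma A G - sigma A (BFGS A G u) = a/b - 1"
  proof -
    have "Ai ** BFGS A G u = Ai ** G - (1/b) *\<^sub>R (Ai ** (G ** outer_prod u u ** G))
           + (1/c) *\<^sub>R (Ai ** (A ** outer_prod u u ** A))"
      unfolding BFGS_def b_def c_def by (simp add: matrix_add_ldistrib mat_sub_ldistrib mat_scaleR_right)
    hence "trace (Ai ** BFGS A G u) = trace (Ai ** G) - (1/b) * a + (1/c) * c"
      by (simp add: trace_add trace_sub trace_scaleR trace_outer2 a_alt c_alt)
    thus ?thesis using c0 unfolding sigma_def Ai_def[symmetric] by simp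
  qed
  have AiA: "\<And>v. Ai *v (A *v v) = v" by (simp add: matrix_vector_mul_assoc invA)
  have num: "u \<bullet> (((G - A) ** Ai ** (G - A)) *v u) = a - 2*b + c"
  proof -
    have "((G - A) ** Ai ** (G - A)) *v u = (G - A) *v (w - u)"
      by (simp add: matrix_vector_mul_assoc[symmetric] matrix_vector_mult_diff_rdistrib
           matrix_vector_mult_diff_distrib w_def invA AiA)
    also have "\<dots> = G *v w - G *v u - G *v u + A *v u"
      by (simp add: matrix_vector_mult_diff_rdistrib matrix_vector_mult_diff_distrib Aw)
    finally have e: "((G - A) ** Ai ** (G - A)) *v u = G *v w - G *v u - G *v u + A *v u" .
    have "u \<bullet> (G *v w) = a" using a_alt by (simp add: w_def matrix_vector_mul_assoc matrix_mul_assoc)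
    thus ?thesis unfolding e b_def c_def by (simp only: inner_diff_right inner_add_right)
  qed
  have cs: "b^2 \<le> a*c"
  proof -
    define r where "r = b/a"
    have "0 \<le> (u - r *\<^sub>R w) \<bullet> (A *v (u - r *\<^sub>R w))"
      using pdA by (cases "u - r *\<^sub>R w = 0") (auto intro: less_imp_le)
    also have "\<dots> = c - 2*r*b + r^2*a"
    proof -
      have wu: "w \<bullet> (A *v u) = b" using sym_inner[OF symA, of w u] b_alt by simp
      have "(u - r *\<^sub>R w) \<bullet> (A *v (u - r *\<^sub>R w))
          = u \<bullet> (A *v u) - r * (w \<bullet> (A *v u)) - r * (u \<bullet> (A *v w) - r * (w \<bullet> (A *v w)))"
        by (simp only: matrix_vector_mult_diff_distrib matrix_vector_mult_scaleR inner_diff_left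
             inner_diff_right inner_scaleR_left inner_scaleR_right)
      also have "\<dots> = c - r*b - r*(b - r*a)" by (simp only: wu b_alt[symmetric] a_def[symmetric] c_def[symmetric])
      also have "\<dots> = c - 2*r*b + r^2*a" by (simp add: power2_eq_square algebra_simps)
      finally show ?thesis .
    qed
    also have "\<dots> = c - b^2/a" using a0 by (simp add: r_def power2_eq_square)
    finally have "b^2/a \<le> c" by simp
    thus ?thesis using a0 by (simp add: pos_divide_le_eq mult.commute)
  qed
  have th2: "(theta A G u)^2 = (a - 2*b + c)/a"
  proof -
    have "a - 2*b + c \<ge> 0"
    proof -
      have e: "(a+c)^2 - 4*(a*c) = (a-c)^2" by algebra
      have "(a + c)^2 - 4*b^2 \<ge> 0" using cs e zero_le_power2[of "a-c"] by linarith
      hence "(a+c)^2 \<ge> (2*b)^2" by (simp add: power_mult_distrib)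
      hence "a + c \<ge> 2*b" using a0 c0 b0 by (meson power2_le_imp_le add_pos_pos less_imp_le)
      thus ?thesis by simp
    qed
    hence "(a - 2*b + c)/a \<ge> 0" using a0 by simp
    thus ?thesis unfolding theta_def Ai_def[symmetric] num a_alt by simp
  qed
  have cb: "c \<le> \<xi>*b"
  proof -
    have "0 \<le> u \<bullet> ((G - (1/\<xi>) *\<^sub>R A) *v u)" using assms(5) unfolding loewner_le_def by blast
    also have "\<dots> = b - c/\<xi>"
      by (simp add: matrix_vector_mult_diff_rdistrib scaleR_matrix_vector_assoc[symmetric] b_def c_def inner_diff_right)
    finally show ?thesis using assms(4) by (simp add: field_simps)
  qed
  show ?thesis unfolding sig th2 by (rule final_ineq[OF a0 b0 c0 assms(4) cs cb])
qed

end
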